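(* For $m\ge1$ let $V_m$ be the generating function of column-convex polygons of width $m$, $$V_m=\sum_{P}\prod_{i=0}^{m}\overline y_i^{\,\overline N_i}\,\overline z_i^{\,\overline S_i}\,\underline y_i^{\,\underline N_i}\,\underline z_i^{\,\underline S_i},$$ the sum being over all column-convex polygons $P$ of width $m$. Regard $V_m$ as a function of $\underline y_m$ (all other variables fixed) and write $V_m(t)$ for $V_m$ with $\underline y_m$ replaced by $t$. Then $$V_1(\underline y_1)=\frac{\overline y_0\underline y_1}{1-\overline y_0\underline y_1},$$ and for $m\ge1$ \begin{align*} V_{m+1}(\underline y_{m+1}) =& \frac{(1-\underline y_m\underline z_m)(1-\overline y_m\overline z_m)\,V_{m}(\underline y_{m+1})}{(1-\underline y_{m+1}\overline y_m)(1-\underline y_{m+1}\underline z_m)(1-\underline y_{m+1}^{-1}\underline y_m)(1-\underline y_{m+1}^{-1}\overline z_m)} \\ & + \frac{(\overline z_m -\underline y_{m+1} \underline y_m \underline z_m)\,V_m(\overline z_m)}{(1-\underline y_{m+1}\underline z_m)(1-\underline y_{m+1}^{-1}\overline z_m)(\underline y_m-\overline z_m)} + \frac{(\underline y_m -\underline y_{m+1} \overline y_m \overline z_m)\,V_m(\underline y_m)}{(1-\underline y_{m+1}\overline y_m)(1-\underline y_{m+1}^{-1}\underline y_m)(\overline z_m-\underline y_m)}. \end{align*}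
   Context: Work on the square lattice; polygons are considered up to translation. A self-avoiding polygon is column-convex if its intersection with every vertical line is connected. A column-convex polygon of width $m$ occupies $m$ consecutive unit columns between the lines $x=0$ and $x=m$. Its boundary is split into two partially directed paths (north, south and east steps) with the same endpoints: the top path, which goes up the left edge and then along the top boundary to the upper-right corner of the last column, and the bottom path, which goes along the bottom boundary from the lower-left corner of the first column and then up the right edge. For $0\le i\le m$, $\overline N_i$ (resp. $\overline S_i$) is the number of north (resp. south) steps of the top path on the line $x=i$, and $\underline N_i$ (resp. $\underline S_i$) the number of north (resp. south) steps of the bottom path on $x=i$ (so $\underline N_0=\underline S_0=\overline N_m=\overline S_m=\overline S_0=\underline S_m=0$). The $\overline y_i,\overline z_i,\underline y_i,\underline z_i$ are indeterminates. *)

theory Defs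
  imports "HOL-Analysis.Analysis"
begin

text \<open>A column-convex polygon of width m, up to translation, is encoded by the
  bottom and top heights (b i, t i) of its columns i = 1..m (column i lies between
  the vertical lines x = i-1 and x = i). Normalisation: b 1 = 0 (vertical
  translation) and b i = t i = 0 outside 1..m. Each column is a nonempty vertical
  segment (b i < t i) and consecutive columns share an edge of positive length
  (this is exactly self-avoidance of the boundary).\<close>

type_synonym ccpoly = "(nat \<Rightarrow> int) \<times> (nat \<Rightarrow> int)"

definition ccp :: "nat \<Rightarrow> ccpoly set" where
  "ccp m = {(b, t). b 1 = 0
     \<and> (\<forall>i. i \<notin> {1..m} \<longrightarrow> b i = 0 \<and> t i = 0)
     \<and> (\<forall>i\<in>{1..m}. b i < t i)
     \<and> (\<forall>i\<in>{1..<m}. max (b i) (b (Suc i)) < min (t i) (t (Suc i)))}"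

text \<open>Step counts on the line x = i of the top path (up the left edge, then along
  the top boundary) and of the bottom path (along the bottom boundary, then up the
  right edge).\<close>

definition Ntop :: "nat \<Rightarrow> ccpoly \<Rightarrow> nat \<Rightarrow> nat" where
  "Ntop m P i = (let b = fst P; t = snd P in
     if i = 0 then nat (t 1 - b 1) else if i < m then nat (t (Suc i) - t i) else 0)"

definition Stop :: "nat \<Rightarrow> ccpoly \<Rightarrow> nat \<Rightarrow> nat" where
  "Stop m P i = (let t = snd P in
     if 0 < i \<and> i < m then nat (t i - t (Suc i)) else 0)"

definition Nbot :: "nat \<Rightarrow> ccpoly \<Rightarrow> nat \<Rightarrow> nat" where
  "Nbot m P i = (let b = fst P; t = snd P in
     if 0 < i \<and> i < m then nat (b (Suc i) - b i)
     else if i = m then nat (t m - b m) else 0)"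

definition Sbot :: "nat \<Rightarrow> ccpoly \<Rightarrow> nat \<Rightarrow> nat" where
  "Sbot m P i = (let b = fst P in
     if 0 < i \<and> i < m then nat (b i - b (Suc i)) else 0)"

definition ccweight ::
  "nat \<Rightarrow> (nat \<Rightarrow> complex) \<Rightarrow> (nat \<Rightarrow> complex) \<Rightarrow> (nat \<Rightarrow> complex) \<Rightarrow> (nat \<Rightarrow> complex)
   \<Rightarrow> ccpoly \<Rightarrow> complex" where
  "ccweight m yt zt yb zb P =
     (\<Prod>i\<in>{0..m}. yt i ^ Ntop m P i * zt i ^ Stop m P i * yb i ^ Nbot m P i * zb i ^ Sbot m P i)"

text \<open>Generating function V_m, evaluated at complex values of the indeterminates
  (yt = overline y, zt = overline z, yb = underline y, zb = underline z).\<close>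

definition Vgf ::
  "nat \<Rightarrow> (nat \<Rightarrow> complex) \<Rightarrow> (nat \<Rightarrow> complex) \<Rightarrow> (nat \<Rightarrow> complex) \<Rightarrow> (nat \<Rightarrow> complex) \<Rightarrow> complex" where
  "Vgf m yt zt yb zb = infsum (ccweight m yt zt yb zb) (ccp m)"

end

theory Submission
  imports Defs
begin

lemma geom_UNIV:
  fixes z :: "'a :: {real_normed_field, banach}"
  assumes "norm z < 1"
  shows "((\<lambda>n::nat. z ^ n) has_sum (1 / (1 - z))) UNIV"
  by (rule norm_summable_imp_has_sum)
     (use assms in \<open>auto simp: norm_power intro!: summable_geometric geometric_sums\<close>)

lemma geom_int_from:
  fixes z :: "'a :: {real_normed_field, banach}"
  assumes "norm z < 1"
  shows "((\<lambda>w::int. z ^ nat (w - k)) has_sum (1 / (1 - z))) {k..}"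
proof -
  have "((\<lambda>n::nat. z ^ n) has_sum (1 / (1 - z))) UNIV" by (rule geom_UNIV[OF assms])
  also have "?this \<longleftrightarrow> ?thesis"
    by (rule has_sum_reindex_bij_witness[of _ "\<lambda>w. nat (w - k)" "\<lambda>n. k + int n"]) auto
  finally show ?thesis .
qed

lemma finH:
  fixes y g :: "'a :: field"
  shows "(y - g) * (\<Sum>u<k. g ^ u * y ^ (k - u)) = y * (y ^ k - g ^ k)"
proof (induction k)
  case 0 then show ?case by simp
next
  case (Suc k)
  have "(\<Sum>u<Suc k. g ^ u * y ^ (Suc k - u)) = y * (\<Sum>u<k. g ^ u * y ^ (k - u)) + g ^ k * y"
    by (simp add: sum_distrib_left Suc_diff_le mult_ac)
  then have "(y - g) * (\<Sum>u<Suc k. g ^ u * y ^ (Suc k - u)) = y * ((y - g) * (\<Sum>u<k. g ^ u * y ^ (k - u))) + (y - g) * g ^ k * y"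
    by (simp add: algebra_simps)
  also have "\<dots> = y * (y * (y ^ k - g ^ k)) + (y - g) * g ^ k * y" using Suc by simp
  finally show ?case by (simp add: algebra_simps)
qed

lemma finG:
  fixes x z :: "'a :: field"
  assumes "1 \<le> h"
  shows "(z - x) * (\<Sum>k\<in>{1..<h}. x ^ (h - k) * z ^ k) = x * z ^ h - z * x ^ h"
  using assms
proof (induction h rule: dec_induct)
  case base then show ?case by simp
next
  case (step h)
  have "(\<Sum>k\<in>{1..<Suc h}. x ^ (Suc h - k) * z ^ k) = x * (\<Sum>k\<in>{1..<h}. x ^ (h - k) * z ^ k) + x * z ^ h"
    using step(1) by (simp add: sum_distrib_left Suc_diff_le mult_ac)
  then have "(z - x) * (\<Sum>k\<in>{1..<Suc h}. x ^ (Suc h - k) * z ^ k) = x * ((z - x) * (\<Sum>k\<in>{1..<h}. x ^ (h - k) * z ^ k)) + (z - x) * x * z ^ h"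
    by (simp add: algebra_simps)
  also have "\<dots> = x * (x * z ^ h - z * x ^ h) + (z - x) * x * z ^ h" using step by simp
  finally show ?case by (simp add: algebra_simps)
qed

lemma S1_sum:
  fixes g d y :: "'a :: {real_normed_field, banach}"
  assumes "norm (d * y) < 1"
  shows "((\<lambda>u::int. g ^ nat u * d ^ nat (- u) * y ^ nat (int k - u)) has_sum
           (y ^ k * (d * y / (1 - d * y)) + (\<Sum>u<k. g ^ u * y ^ (k - u)))) {..<int k}"
proof -
  have neg: "((\<lambda>u::int. g ^ nat u * d ^ nat (- u) * y ^ nat (int k - u)) has_sum
           (y ^ k * (d * y / (1 - d * y)))) {..<0}"
  proof -
    have "((\<lambda>n. y ^ k * (d * y) ^ n) has_sum (y ^ k * (d * y / (1 - d * y)))) {1..}"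
      by (rule has_sum_cmult_right[OF has_sum_geometric_from_1[OF assms]])
    also have "?this \<longleftrightarrow> ?thesis"
    proof (rule has_sum_reindex_bij_witness[of _ "\<lambda>u. nat (- u)" "\<lambda>n. - int n"])
      fix n :: nat assume "n \<in> {1..}"
      then have "nat (int k - (- int n)) = k + n" by auto
      then show "g ^ nat (- int n) * d ^ nat (- (- int n)) * y ^ nat (int k - (- int n)) = y ^ k * (d * y) ^ n"
        by (simp add: power_add power_mult_distrib)
    qed auto
    finally show ?thesis .
  qed
  have pos: "((\<lambda>u::int. g ^ nat u * d ^ nat (- u) * y ^ nat (int k - u)) has_sum
           (\<Sum>u<k. g ^ u * y ^ (k - u))) {0..<int k}"
  proof (rule has_sum_finiteI)
    show "finite {0..<int k}" by simp
    have "{0..<int k} = int ` {..<k}" by (simp add: image_atLeastZeroLessThan_int)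
    then have "(\<Sum>u\<in>{0..<int k}. g ^ nat u * d ^ nat (- u) * y ^ nat (int k - u))
       = (\<Sum>u<k. g ^ nat (int u) * d ^ nat (- int u) * y ^ nat (int k - int u))"
      by (simp add: sum.reindex)
    also have "\<dots> = (\<Sum>u<k. g ^ u * y ^ (k - u))"
      by (intro sum.cong refl) (simp add: nat_diff_distrib)
    finally show "(\<Sum>u<k. g ^ u * y ^ (k - u)) = (\<Sum>u\<in>{0..<int k}. g ^ nat u * d ^ nat (- u) * y ^ nat (int k - u))" by (rule sym)
  qed
  have disj: "{..<0::int} \<inter> {0..<int k} = {}" by auto
  have "{..<int k} = {..<0} \<union> {0..<int k}" by auto
  then show ?thesis using has_sum_Un_disjoint[OF neg pos disj] by simp
qed

lemma cY:
  fixes a b g d y :: "'a :: field"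
  assumes "y \<noteq> 0" "y - g \<noteq> 0" "y - b \<noteq> 0" "1 - a * y \<noteq> 0" "1 - d * y \<noteq> 0" "1 - y * a \<noteq> 0" "1 - y * d \<noteq> 0"
  shows "(d * y / (1 - d * y) + y / (y - g)) / (1 - a * y) + (d * y / (1 - d * y) + y / (y - g)) * b / (y - b) = (1 - g * d) * (1 - a * b)
           / ((1 - y * a) * (1 - y * d) * ((y - g) / y) * ((y - b) / y))"
  using assms by (simp add: divide_simps) (simp add: algebra_simps)
lemma cG:
  fixes a b g d y :: "'a :: field"
  assumes "y \<noteq> 0" "y - g \<noteq> 0" "g - b \<noteq> 0" "b - g \<noteq> 0" "1 - a * y \<noteq> 0" "1 - y * a \<noteq> 0"
  shows "(- y / (y - g)) / (1 - a * y) + (- y / (y - g)) * b / (g - b) = (g - y * a * b) / ((1 - y * a) * ((y - g) / y) * (b - g))"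
  using assms by (simp add: divide_simps) (simp add: algebra_simps)
lemma cB:
  fixes a b g d y :: "'a :: field"
  assumes "y \<noteq> 0" "y - g \<noteq> 0" "y - b \<noteq> 0" "g - b \<noteq> 0" "1 - d * y \<noteq> 0" "1 - y * d \<noteq> 0"
  shows "- (d * y / (1 - d * y) + y / (y - g)) * y / (y - b) - (- y / (y - g)) * g / (g - b) = (b - y * g * d) / ((1 - y * d) * ((y - b) / y) * (g - b))"
  using assms by (simp add: divide_simps) (simp add: algebra_simps)
lemma rearr:
  fixes a b g y A C Y B G :: "'a :: field"
  shows "(A * Y + C * G) / (1 - a * y) + A * ((b * Y - y * B) / (y - b)) + C * ((b * G - g * B) / (g - b))
     = (A / (1 - a * y) + A * b / (y - b)) * Y + (- A * y / (y - b) - C * g / (g - b)) * B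
       + (C / (1 - a * y) + C * b / (g - b)) * G"
  by (simp add: divide_inverse algebra_simps)

lemma alg_final:
  fixes a b g d y Y B G :: "'a :: field"
  assumes "y \<noteq> 0" "y \<noteq> g" "y \<noteq> b" "g \<noteq> b" "1 - a * y \<noteq> 0" "1 - d * y \<noteq> 0"
  shows "((d * y / (1 - d * y) + y / (y - g)) * Y + (- y / (y - g)) * G) / (1 - a * y)
       + (d * y / (1 - d * y) + y / (y - g)) * ((b * Y - y * B) / (y - b)) + (- y / (y - g)) * ((b * G - g * B) / (g - b))
       = (1 - g * d) * (1 - a * b) * Y
           / ((1 - y * a) * (1 - y * d) * (1 - inverse y * g) * (1 - inverse y * b))
       + (b - y * g * d) * B / ((1 - y * d) * (1 - inverse y * b) * (g - b))
       + (g - y * a * b) * G / ((1 - y * a) * (1 - inverse y * g) * (b - g))"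
proof -
  have h1: "y - g \<noteq> 0" "y - b \<noteq> 0" "g - b \<noteq> 0" "b - g \<noteq> 0" "1 - y * a \<noteq> 0" "1 - y * d \<noteq> 0"
    using assms by (auto simp: mult.commute)
  have h2: "1 - inverse y * g = (y - g) / y" "1 - inverse y * b = (y - b) / y"
    using assms by (auto simp: field_simps)
  note eY = cY[OF assms(1) h1(1) h1(2) assms(5) assms(6) h1(5) h1(6)]
  note eG = cG[OF assms(1) h1(1) h1(3) h1(4) assms(5) h1(5)]
  note eB = cB[OF assms(1) h1(1) h1(2) h1(3) assms(6) h1(6)]
  show ?thesis unfolding rearr h2 eY eG eB by (simp only: times_divide_eq_left)
qed
lemma int_abs_summable:
  fixes r :: real
  assumes "0 \<le> r" "r < 1"
  shows "(\<lambda>n::int. r ^ nat \<bar>n - c\<bar>) summable_on UNIV"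
proof -
  have "((\<lambda>n::int. r ^ nat (n - c)) has_sum (1 / (1 - r))) {c..}"
    using geom_int_from[of r c] assms by simp
  then have s1: "((\<lambda>n::int. r ^ nat \<bar>n - c\<bar>) has_sum (1 / (1 - r))) {c..}"
    by (rule has_sum_cong[THEN iffD1, rotated]) auto
  have "((\<lambda>n. r ^ n) has_sum (r / (1 - r))) {1..}"
    using has_sum_geometric_from_1[of r] assms by simp
  also have "?this \<longleftrightarrow> ((\<lambda>n::int. r ^ nat \<bar>n - c\<bar>) has_sum (r / (1 - r))) {..<c}"
    by (rule has_sum_reindex_bij_witness[of _ "\<lambda>n. nat (c - n)" "\<lambda>k. c - int k"]) auto
  finally have s2: "((\<lambda>n::int. r ^ nat \<bar>n - c\<bar>) has_sum (r / (1 - r))) {..<c}" .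
  have "UNIV = {c..} \<union> {..<c}" by auto
  moreover have "{c..} \<inter> {..<c} = {}" by auto
  ultimately show ?thesis using has_sum_Un_disjoint[OF s1 s2] unfolding summable_on_def by metis
qed

lemma prod_summable:
  fixes f g :: "int \<Rightarrow> real"
  assumes "f summable_on UNIV" "g summable_on UNIV" "\<And>x. f x \<ge> 0" "\<And>x. g x \<ge> 0"
  shows "(\<lambda>(u,w). f u * g w) summable_on UNIV"
proof -
  have "(\<lambda>(u,w). f u * g w) summable_on Sigma UNIV (\<lambda>_. UNIV)"
  proof (rule summable_on_SigmaI[where g = "\<lambda>u. f u * infsum g UNIV"])
    show "((\<lambda>w. case (u, w) of (u, w) \<Rightarrow> f u * g w) has_sum f u * infsum g UNIV) UNIV" for u
      using has_sum_cmult_right[OF has_sum_infsum[OF assms(2)], of "f u"] by simp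
    show "(\<lambda>u. f u * infsum g UNIV) summable_on UNIV"
      using summable_on_cmult_left[OF assms(1)] by simp
  qed (use assms in \<open>auto intro: mult_nonneg_nonneg\<close>)
  then show ?thesis by simp
qed

definition fw :: "'a \<Rightarrow> 'a \<Rightarrow> 'a \<Rightarrow> 'a \<Rightarrow> 'a \<Rightarrow> int \<Rightarrow> int \<times> int \<Rightarrow> 'a::comm_ring_1" where
  "fw a b g d y H = (\<lambda>(u,w). a ^ nat (w - H) * b ^ nat (H - w) * g ^ nat u * d ^ nat (- u) * y ^ nat (w - u))"

definition Fib :: "int \<Rightarrow> (int \<times> int) set" where
  "Fib H = {(u,w). max 0 u < min H w}"

lemma fw_bound:
  fixes a b g d y :: "'a :: real_normed_field"
  assumes "norm a \<le> r" "norm b \<le> r" "norm g \<le> r" "norm d \<le> r" "norm y \<le> 1"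
  shows "norm (fw a b g d y H (u,w)) \<le> r ^ nat \<bar>u - 0\<bar> * r ^ nat \<bar>w - H\<bar>"
proof -
  have r0: "0 \<le> r" using assms(1) norm_ge_zero order_trans by blast
  have "norm (fw a b g d y H (u,w)) = norm a ^ nat (w - H) * norm b ^ nat (H - w) * norm g ^ nat u * norm d ^ nat (- u) * norm y ^ nat (w - u)"
    by (simp add: fw_def norm_mult norm_power)
  also have "\<dots> \<le> r ^ nat (w - H) * r ^ nat (H - w) * r ^ nat u * r ^ nat (- u) * 1"
    by (intro mult_mono power_mono power_le_one) (use assms r0 in auto)
  also have "\<dots> = r ^ (nat u + nat (- u)) * r ^ (nat (w - H) + nat (H - w))"
    by (simp add: power_add mult_ac)
  also have "nat u + nat (- u) = nat \<bar>u - 0\<bar>" by auto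
  also have "nat (w - H) + nat (H - w) = nat \<bar>w - H\<bar>" by auto
  finally show ?thesis .
qed

lemma fw_summable:
  fixes a b g d y :: "'a :: {real_normed_field, banach}"
  assumes "norm a < 1" "norm b < 1" "norm g < 1" "norm d < 1" "norm y < 1"
  shows "fw a b g d y H summable_on A"
proof -
  define r where "r = max (max (norm a) (norm b)) (max (norm g) (norm d))"
  have r: "0 \<le> r" "r < 1" using assms by (auto simp: r_def le_max_iff_disj)
  have SS: "(\<lambda>(u,w). r ^ nat \<bar>u - 0\<bar> * r ^ nat \<bar>w - H\<bar>) summable_on UNIV"
    by (rule prod_summable) (use int_abs_summable[OF r, of 0] int_abs_summable[OF r] r in auto)
  have BB: "norm (fw a b g d y H x) \<le> (case x of (u, w) \<Rightarrow> r ^ nat \<bar>u - 0\<bar> * r ^ nat \<bar>w - H\<bar>)" if "x \<in> UNIV" for x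
  proof -
    obtain u w where x: "x = (u,w)" by (cases x)
    show ?thesis
      unfolding x using fw_bound[of a r b g d y H u w] assms by (simp add: r_def)
  qed
  have "(\<lambda>x. norm (fw a b g d y H x)) summable_on UNIV"
    by (rule Infinite_Sum.abs_summable_on_comparison_test'[OF SS BB])
  then have "fw a b g d y H summable_on UNIV" by (rule abs_summable_summable)
  then show ?thesis by (rule summable_on_subset_banach) auto
qed

definition S1v :: "'a \<Rightarrow> 'a \<Rightarrow> 'a \<Rightarrow> nat \<Rightarrow> 'a::field" where
  "S1v g d y k = y ^ k * (d * y / (1 - d * y)) + (\<Sum>u<k. g ^ u * y ^ (k - u))"

lemma S1v_eq:
  fixes g d y :: "'a :: field"
  assumes "y \<noteq> g"
  shows "S1v g d y k = (d * y / (1 - d * y) + y / (y - g)) * y ^ k + (- y / (y - g)) * g ^ k"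
proof -
  have "y - g \<noteq> 0" using assms by simp
  then have "(\<Sum>u<k. g ^ u * y ^ (k - u)) = y * (y ^ k - g ^ k) / (y - g)"
    using finH[of y g k] by (simp add: eq_divide_eq mult.commute)
  then show ?thesis unfolding S1v_def
    by (simp add: divide_inverse algebra_simps)
qed

lemma fib_value0:
  fixes a b g d y :: "'a :: {real_normed_field, banach}"
  assumes n: "norm a < 1" "norm b < 1" "norm g < 1" "norm d < 1" "norm y < 1"
  assumes ne: "y \<noteq> 0" "y \<noteq> g" "y \<noteq> b" "g \<noteq> b"
  assumes h: "1 \<le> h"
  shows "(fw a b g d y (int h) has_sum
        ((1 - g * d) * (1 - a * b) * y ^ h
           / ((1 - y * a) * (1 - y * d) * (1 - inverse y * g) * (1 - inverse y * b))
       + (b - y * g * d) * b ^ h / ((1 - y * d) * (1 - inverse y * b) * (g - b))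
       + (g - y * a * b) * g ^ h / ((1 - y * a) * (1 - inverse y * g) * (b - g)))) (Fib (int h))"
proof -
  define H where "H = int h"
  have nay: "norm (a * y) < 1" "norm (d * y) < 1"
    using n mult_strict_mono'[of "norm a" 1 "norm y" 1] mult_strict_mono'[of "norm d" 1 "norm y" 1]
    by (auto simp: norm_mult)
  have d1: "1 - a * y \<noteq> 0" "1 - d * y \<noteq> 0"
    using nay by (auto dest!: sym[of 1] simp: right_minus_eq)
  define T where "T u = g ^ nat u * d ^ nat (- u) * y ^ nat (H - u)" for u :: int
  define Fa where "Fa = {..<H} \<times> {H..}"
  define Fb where "Fb = (\<lambda>(w,u). (u,w)) ` (Sigma {0<..<H} (\<lambda>w. {..<w}))"
  have hasFa: "(fw a b g d y H has_sum (S1v g d y h * (1 / (1 - a * y)))) Fa"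
    unfolding Fa_def
  proof (rule has_sum_SigmaI[where g = "\<lambda>u. T u * (1 / (1 - a * y))"])
    fix u assume u: "u \<in> {..<H}"
    have "((\<lambda>w. T u * (a * y) ^ nat (w - H)) has_sum T u * (1 / (1 - a * y))) {H..}"
      by (rule has_sum_cmult_right[OF geom_int_from[OF nay(1)]])
    moreover have "T u * (a * y) ^ nat (w - H) = fw a b g d y H (u, w)" if "w \<in> {H..}" for w
    proof -
      have "nat (w - u) = nat (H - u) + nat (w - H)" "nat (H - w) = 0" using u that by auto
      then show ?thesis unfolding fw_def T_def by (simp add: power_add power_mult_distrib mult_ac)
    qed
    ultimately show "((\<lambda>w. fw a b g d y H (u, w)) has_sum T u * (1 / (1 - a * y))) {H..}"
      by (rule has_sum_cong[THEN iffD1, rotated]) simp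
  next
    show "((\<lambda>u. T u * (1 / (1 - a * y))) has_sum S1v g d y h * (1 / (1 - a * y))) {..<H}"
      unfolding T_def H_def S1v_def by (rule has_sum_cmult_left[OF S1_sum[OF nay(2)]])
  next
    show "fw a b g d y H summable_on {..<H} \<times> {H..}" by (rule fw_summable[OF n])
  qed
  have hasFb: "(fw a b g d y H has_sum (\<Sum>w\<in>{0<..<H}. b ^ nat (H - w) * S1v g d y (nat w))) Fb"
  proof -
    have inj: "inj_on (\<lambda>(w,u). (u::int,w::int)) X" for X by (auto simp: inj_on_def)
    have "((fw a b g d y H \<circ> (\<lambda>(w,u). (u,w))) has_sum (\<Sum>w\<in>{0<..<H}. b ^ nat (H - w) * S1v g d y (nat w)))
            (Sigma {0<..<H} (\<lambda>w. {..<w}))"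
    proof (rule has_sum_SigmaI[where g = "\<lambda>w. b ^ nat (H - w) * S1v g d y (nat w)"])
      fix w assume w: "w \<in> {0<..<H}"
      then have wn: "int (nat w) = w" by simp
      have "((\<lambda>u. b ^ nat (H - w) * (g ^ nat u * d ^ nat (- u) * y ^ nat (int (nat w) - u))) has_sum
               b ^ nat (H - w) * S1v g d y (nat w)) {..<int (nat w)}"
        unfolding S1v_def by (rule has_sum_cmult_right[OF S1_sum[OF nay(2)]])
      moreover have "(fw a b g d y H \<circ> (\<lambda>(w,u). (u,w))) (w, u) = b ^ nat (H - w) * (g ^ nat u * d ^ nat (- u) * y ^ nat (int (nat w) - u))" for u
        using w unfolding fw_def wn by (simp add: mult_ac)
      ultimately show "((\<lambda>u. (fw a b g d y H \<circ> (\<lambda>(w,u). (u,w))) (w, u)) has_sum b ^ nat (H - w) * S1v g d y (nat w)) {..<w}"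
        unfolding wn by (simp del: o_apply)
    next
      show "((\<lambda>w. b ^ nat (H - w) * S1v g d y (nat w)) has_sum (\<Sum>w\<in>{0<..<H}. b ^ nat (H - w) * S1v g d y (nat w))) {0<..<H}"
        by (rule has_sum_finiteI) auto
    next
      have "fw a b g d y H summable_on (\<lambda>(w,u). (u,w)) ` (Sigma {0<..<H} (\<lambda>w. {..<w}))"
        by (rule fw_summable[OF n])
      then show "(fw a b g d y H \<circ> (\<lambda>(w,u). (u,w))) summable_on (Sigma {0<..<H} (\<lambda>w. {..<w}))"
        by (subst (asm) summable_on_reindex[OF inj])
    qed
    then show ?thesis unfolding Fb_def by (subst has_sum_reindex[OF inj])
  qed
  have disj: "Fa \<inter> Fb = {}" unfolding Fa_def Fb_def by auto
  have un: "Fib H = Fa \<union> Fb"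
  proof -
    have "x \<in> Fib H \<longleftrightarrow> x \<in> Fa \<union> Fb" for x
    proof -
      obtain u w where x: "x = (u,w)" by (cases x)
      have "(u,w) \<in> Fb \<longleftrightarrow> 0 < w \<and> w < H \<and> u < w"
        unfolding Fb_def by (auto simp: image_iff)
      moreover have "0 < H" unfolding H_def using h by simp
      ultimately show ?thesis unfolding x Fib_def Fa_def by auto
    qed
    then show ?thesis by blast
  qed
  have tot: "(fw a b g d y H has_sum (S1v g d y h * (1 / (1 - a * y))
        + (\<Sum>w\<in>{0<..<H}. b ^ nat (H - w) * S1v g d y (nat w)))) (Fib H)"
    unfolding un by (rule has_sum_Un_disjoint[OF hasFa hasFb disj])
  define A where "A = d * y / (1 - d * y) + y / (y - g)"
  define C where "C = - y / (y - g)"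
  have "{0<..<H} = int ` {1..<h}" unfolding H_def image_int_atLeastLessThan
    by auto
  then have "(\<Sum>w\<in>{0<..<H}. b ^ nat (H - w) * S1v g d y (nat w)) = (\<Sum>k\<in>{1..<h}. b ^ (h - k) * S1v g d y k)"
    unfolding H_def by (simp add: sum.reindex nat_diff_distrib)
  also have "\<dots> = (\<Sum>k\<in>{1..<h}. A * (b ^ (h - k) * y ^ k) + C * (b ^ (h - k) * g ^ k))"
    unfolding S1v_eq[OF ne(2)] A_def C_def by (intro sum.cong refl) (simp add: algebra_simps)
  also have "\<dots> = A * (\<Sum>k\<in>{1..<h}. b ^ (h - k) * y ^ k) + C * (\<Sum>k\<in>{1..<h}. b ^ (h - k) * g ^ k)"
    by (simp add: sum_distrib_left sum.distrib)
  also have "(\<Sum>k\<in>{1..<h}. b ^ (h - k) * y ^ k) = (b * y ^ h - y * b ^ h) / (y - b)"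
    using finG[OF h, of y b] ne by (simp add: field_simps)
  also have "(\<Sum>k\<in>{1..<h}. b ^ (h - k) * g ^ k) = (b * g ^ h - g * b ^ h) / (g - b)"
    using finG[OF h, of g b] ne by (simp add: field_simps)
  finally have e2: "(\<Sum>w\<in>{0<..<H}. b ^ nat (H - w) * S1v g d y (nat w)) = 
     A * ((b * y ^ h - y * b ^ h) / (y - b)) + C * ((b * g ^ h - g * b ^ h) / (g - b))" .
  have e1: "S1v g d y h * (1 / (1 - a * y)) = (A * y ^ h + C * g ^ h) / (1 - a * y)"
    unfolding S1v_eq[OF ne(2)] A_def C_def by simp
  have V: "S1v g d y h * (1 / (1 - a * y)) + (\<Sum>w\<in>{0<..<H}. b ^ nat (H - w) * S1v g d y (nat w)) =
        (1 - g * d) * (1 - a * b) * y ^ h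
           / ((1 - y * a) * (1 - y * d) * (1 - inverse y * g) * (1 - inverse y * b))
       + (b - y * g * d) * b ^ h / ((1 - y * d) * (1 - inverse y * b) * (g - b))
       + (g - y * a * b) * g ^ h / ((1 - y * a) * (1 - inverse y * g) * (b - g))"
    unfolding e1 e2 A_def C_def add.assoc[symmetric] by (rule alg_final[OF ne d1])
  show ?thesis using tot unfolding V unfolding H_def .
qed

definition gw :: "nat \<Rightarrow> (nat \<Rightarrow> 'a::comm_ring_1) \<Rightarrow> (nat \<Rightarrow> 'a) \<Rightarrow> (nat \<Rightarrow> 'a) \<Rightarrow> (nat \<Rightarrow> 'a) \<Rightarrow> ccpoly \<Rightarrow> 'a" where
  "gw m yt zt yb zb P =
     (\<Prod>i\<in>{0..m}. yt i ^ Ntop m P i * zt i ^ Stop m P i * yb i ^ Nbot m P i * zb i ^ Sbot m P i)"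

definition Wp :: "nat \<Rightarrow> (nat \<Rightarrow> 'a::comm_ring_1) \<Rightarrow> (nat \<Rightarrow> 'a) \<Rightarrow> (nat \<Rightarrow> 'a) \<Rightarrow> (nat \<Rightarrow> 'a) \<Rightarrow> ccpoly \<Rightarrow> 'a" where
  "Wp m yt zt yb zb P =
     (\<Prod>i<m. yt i ^ Ntop m P i * zt i ^ Stop m P i * yb i ^ Nbot m P i * zb i ^ Sbot m P i)"

definition fwt :: "'a \<Rightarrow> 'a \<Rightarrow> 'a \<Rightarrow> 'a \<Rightarrow> 'a \<Rightarrow> int \<Rightarrow> int \<Rightarrow> int \<times> int \<Rightarrow> 'a::comm_ring_1" where
  "fwt a b g d y B T = (\<lambda>(u,w). a ^ nat (w - T) * b ^ nat (T - w) * g ^ nat (u - B) * d ^ nat (B - u) * y ^ nat (w - u))"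

definition FibT :: "int \<Rightarrow> int \<Rightarrow> (int \<times> int) set" where
  "FibT B T = {(u,w). max B u < min T w}"

definition Ext :: "nat \<Rightarrow> ccpoly \<times> (int \<times> int) \<Rightarrow> ccpoly" where
  "Ext m = (\<lambda>(P, (u, w)). ((fst P)(Suc m := u), (snd P)(Suc m := w)))"

definition Res :: "nat \<Rightarrow> ccpoly \<Rightarrow> ccpoly \<times> (int \<times> int)" where
  "Res m = (\<lambda>Q. (((fst Q)(Suc m := 0), (snd Q)(Suc m := 0)), (fst Q (Suc m), snd Q (Suc m))))"

lemma ccweight_gw: "ccweight m yt zt yb zb P = gw m yt zt yb zb P"
  by (simp add: ccweight_def gw_def)

lemma gw_split:
  assumes "1 \<le> m"
  shows "gw m yt zt yb zb P = Wp m yt zt yb zb P * yb m ^ nat (snd P m - fst P m)"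
proof -
  have "{0..m} = insert m {..<m}" by auto
  then have "gw m yt zt yb zb P = Wp m yt zt yb zb P *
     (yt m ^ Ntop m P m * zt m ^ Stop m P m * yb m ^ Nbot m P m * zb m ^ Sbot m P m)"
    unfolding gw_def Wp_def by (simp add: mult.commute)
  moreover have "Ntop m P m = 0" "Stop m P m = 0" "Sbot m P m = 0" "Nbot m P m = nat (snd P m - fst P m)"
    using assms by (auto simp: Ntop_def Stop_def Sbot_def Nbot_def Let_def)
  ultimately show ?thesis by simp
qed

lemma Wp_upd: "Wp m yt zt (yb(m := s)) zb P = Wp m yt zt yb zb P"
  unfolding Wp_def by (intro prod.cong refl) auto

lemma gw_upd:
  assumes "1 \<le> m"
  shows "gw m yt zt (yb(m := s)) zb P = Wp m yt zt yb zb P * s ^ nat (snd P m - fst P m)"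
  using gw_split[OF assms, of yt zt "yb(m := s)" zb P] by (simp add: Wp_upd)

lemma gw_Ext:
  assumes "1 \<le> m"
  shows "gw (Suc m) yt zt yb zb (Ext m (P, x)) = Wp m yt zt yb zb P *
     fwt (yt m) (zt m) (yb m) (zb m) (yb (Suc m)) (fst P m) (snd P m) x"
proof -
  obtain b t where P: "P = (b, t)" by (cases P)
  obtain u w where x: "x = (u, w)" by (cases x)
  define Q where "Q = Ext m (P, x)"
  have Q: "Q = (b(Suc m := u), t(Suc m := w))" unfolding Q_def Ext_def P x by simp
  let ?f = "\<lambda>i. yt i ^ Ntop (Suc m) Q i * zt i ^ Stop (Suc m) Q i * yb i ^ Nbot (Suc m) Q i * zb i ^ Sbot (Suc m) Q i"
  have "{0..Suc m} = insert (Suc m) (insert m {..<m})" by auto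
  then have "gw (Suc m) yt zt yb zb Q = (\<Prod>i<m. ?f i) * ?f m * ?f (Suc m)"
    unfolding gw_def by (simp add: mult_ac)
  also have "(\<Prod>i<m. ?f i) = Wp m yt zt yb zb P"
    unfolding Wp_def
  proof (intro prod.cong refl)
    fix i assume "i \<in> {..<m}"
    then have i: "i < m" by simp
    have "Ntop (Suc m) Q i = Ntop m P i" "Stop (Suc m) Q i = Stop m P i"
         "Nbot (Suc m) Q i = Nbot m P i" "Sbot (Suc m) Q i = Sbot m P i"
      using i assms unfolding Q P by (auto simp: Ntop_def Stop_def Nbot_def Sbot_def Let_def)
    then show "?f i = yt i ^ Ntop m P i * zt i ^ Stop m P i * yb i ^ Nbot m P i * zb i ^ Sbot m P i"
      by simp
  qed
  also have "?f m = yt m ^ nat (w - t m) * zt m ^ nat (t m - w) * yb m ^ nat (u - b m) * zb m ^ nat (b m - u)"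
    using assms unfolding Q by (simp add: Ntop_def Stop_def Nbot_def Sbot_def Let_def)
  also have "?f (Suc m) = yb (Suc m) ^ nat (w - u)"
    unfolding Q by (simp add: Ntop_def Stop_def Nbot_def Sbot_def Let_def)
  finally show ?thesis unfolding Q_def P x fwt_def by (simp add: mult_ac)
qed

lemma Ext_in:
  assumes "1 \<le> m" "P \<in> ccp m" "x \<in> FibT (fst P m) (snd P m)"
  shows "Ext m (P, x) \<in> ccp (Suc m)"
proof -
  obtain b t where P: "P = (b, t)" by (cases P)
  obtain u w where x: "x = (u, w)" by (cases x)
  show ?thesis using assms unfolding P x Ext_def ccp_def FibT_def
    by (auto simp: less_Suc_eq_le)
qed

lemma Res_in:
  assumes "1 \<le> m" "Q \<in> ccp (Suc m)"
  shows "fst (Res m Q) \<in> ccp m" "snd (Res m Q) \<in> FibT (fst (fst (Res m Q)) m) (snd (fst (Res m Q)) m)"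
proof -
  obtain b t where Q: "Q = (b, t)" by (cases Q)
  show "fst (Res m Q) \<in> ccp m" using assms unfolding Q Res_def ccp_def
    by auto
  show "snd (Res m Q) \<in> FibT (fst (fst (Res m Q)) m) (snd (fst (Res m Q)) m)"
    using assms unfolding Q Res_def ccp_def FibT_def by auto
qed

lemma Ext_Res: "Ext m (Res m Q) = Q"
  by (cases Q) (simp add: Ext_def Res_def)

lemma Res_Ext:
  assumes "P \<in> ccp m"
  shows "Res m (Ext m (P, x)) = (P, x)"
proof -
  obtain b t where P: "P = (b, t)" by (cases P)
  obtain u w where x: "x = (u, w)" by (cases x)
  have "b (Suc m) = 0" "t (Suc m) = 0" using assms unfolding P ccp_def by auto
  then have "b(Suc m := 0) = b" "t(Suc m := 0) = t" by auto
  then show ?thesis unfolding P x Ext_def Res_def by simp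
qed

lemma gw_norm:
  fixes yt zt yb zb :: "nat \<Rightarrow> 'a::real_normed_field"
  shows "norm (gw m yt zt yb zb P) = gw m (\<lambda>i. norm (yt i)) (\<lambda>i. norm (zt i)) (\<lambda>i. norm (yb i)) (\<lambda>i. norm (zb i)) P"
  unfolding gw_def by (simp add: prod_norm[symmetric] norm_mult norm_power)

lemma gw_nonneg:
  fixes yt zt yb zb :: "nat \<Rightarrow> real"
  assumes "\<And>i. 0 \<le> yt i" "\<And>i. 0 \<le> zt i" "\<And>i. 0 \<le> yb i" "\<And>i. 0 \<le> zb i"
  shows "0 \<le> gw m yt zt yb zb P"
  unfolding gw_def using assms by (intro prod_nonneg) auto

lemma gw_mono:
  fixes yt zt yb zb yt' zt' yb' zb' :: "nat \<Rightarrow> real"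
  assumes "\<And>i. 0 \<le> yt i" "\<And>i. 0 \<le> zt i" "\<And>i. 0 \<le> yb i" "\<And>i. 0 \<le> zb i"
  assumes "\<And>i. i \<le> m \<Longrightarrow> yt i \<le> yt' i" "\<And>i. i \<le> m \<Longrightarrow> zt i \<le> zt' i"
          "\<And>i. i \<le> m \<Longrightarrow> yb i \<le> yb' i" "\<And>i. i \<le> m \<Longrightarrow> zb i \<le> zb' i"
  shows "gw m yt zt yb zb P \<le> gw m yt' zt' yb' zb' P"
proof -
  have "\<And>i. i \<le> m \<Longrightarrow> 0 \<le> yt' i" "\<And>i. i \<le> m \<Longrightarrow> 0 \<le> zt' i"
       "\<And>i. i \<le> m \<Longrightarrow> 0 \<le> yb' i" "\<And>i. i \<le> m \<Longrightarrow> 0 \<le> zb' i"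
    using assms by (meson order_trans)+
  then show ?thesis
    unfolding gw_def using assms by (intro prod_mono) (auto intro!: mult_mono power_mono)
qed

lemma base_has_sum:
  fixes yt zt yb zb :: "nat \<Rightarrow> 'a::{real_normed_field, banach}"
  assumes "norm (yt 0 * yb 1) < 1"
  shows "(gw 1 yt zt yb zb has_sum (yt 0 * yb 1 / (1 - yt 0 * yb 1))) (ccp 1)"
proof -
  have "((\<lambda>n. (yt 0 * yb 1) ^ n) has_sum (yt 0 * yb 1 / (1 - yt 0 * yb 1))) {1..}"
    by (rule has_sum_geometric_from_1[OF assms])
  also have "?this \<longleftrightarrow> ?thesis"
  proof (rule has_sum_reindex_bij_witness[of _ "\<lambda>Q. nat (snd Q 1)" "\<lambda>n. (\<lambda>_. 0, (\<lambda>_. 0)(1 := int n))"])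
    fix n :: nat assume n: "n \<in> {1..}"
    show "(\<lambda>_. 0, (\<lambda>_. 0)(1 := int n)) \<in> ccp 1" using n by (auto simp: ccp_def)
    have "{0..1::nat} = {0, 1}" by auto
    then show "gw 1 yt zt yb zb (\<lambda>_. 0, (\<lambda>_. 0)(1 := int n)) = (yt 0 * yb 1) ^ n"
      by (simp add: gw_def Ntop_def Stop_def Nbot_def Sbot_def Let_def power_mult_distrib)
  next
    fix Q assume Q: "Q \<in> ccp 1"
    obtain b t where Qbt: "Q = (b, t)" by (cases Q)
    have "b i = 0" for i
    proof (cases "i = 1")
      case True then show ?thesis using Q unfolding Qbt ccp_def by simp
    next
      case False then show ?thesis using Q unfolding Qbt ccp_def by simp
    qed
    then have b: "b = (\<lambda>_. 0)" by (simp add: fun_eq_iff)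
    have t: "t i = 0" if "i \<noteq> 1" for i using Q that unfolding Qbt ccp_def by simp
    have t1: "t 1 > 0" using Q unfolding Qbt ccp_def by auto
    have "t = (\<lambda>_. 0)(1 := int (nat (t 1)))" using t t1 by (auto simp: fun_eq_iff)
    then show "(\<lambda>_. 0, (\<lambda>_. 0)(1 := int (nat (snd Q 1)))) = Q" unfolding Qbt b by simp
    show "nat (snd Q 1) \<in> {1..}" using t1 unfolding Qbt by auto
  qed simp_all
  finally show ?thesis .
qed


lemma fib_value:
  fixes a b g d y :: "'a :: {real_normed_field, banach}"
  assumes n: "norm a < 1" "norm b < 1" "norm g < 1" "norm d < 1" "norm y < 1"
  assumes ne: "y \<noteq> 0" "y \<noteq> g" "y \<noteq> b" "g \<noteq> b"
  assumes BT: "B < T"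
  shows "(fwt a b g d y B T has_sum
        ((1 - g * d) * (1 - a * b) * y ^ nat (T - B)
           / ((1 - y * a) * (1 - y * d) * (1 - inverse y * g) * (1 - inverse y * b))
       + (b - y * g * d) * b ^ nat (T - B) / ((1 - y * d) * (1 - inverse y * b) * (g - b))
       + (g - y * a * b) * g ^ nat (T - B) / ((1 - y * a) * (1 - inverse y * g) * (b - g)))) (FibT B T)"
proof -
  define h where "h = nat (T - B)"
  have h: "1 \<le> h" "int h = T - B" using BT unfolding h_def by auto
  note fv = fib_value0[OF n ne h(1)]
  have "(fw a b g d y (int h) has_sum V) (Fib (int h)) \<longleftrightarrow> (fwt a b g d y B T has_sum V) (FibT B T)" for V
  proof (rule has_sum_reindex_bij_witness[of _ "\<lambda>(u,w). (u - B, w - B)" "\<lambda>(u,w). (u + B, w + B)"])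
    fix x assume "x \<in> Fib (int h)"
    obtain u w where x: "x = (u, w)" by (cases x)
    show "fwt a b g d y B T ((\<lambda>(u,w). (u + B, w + B)) x) = fw a b g d y (int h) x"
      unfolding x fwt_def fw_def h(2) by (simp add: algebra_simps)
  qed (auto simp: Fib_def FibT_def h(2))
  then show ?thesis using fv unfolding h_def by simp
qed

definition RH :: "'a \<Rightarrow> 'a \<Rightarrow> 'a \<Rightarrow> 'a \<Rightarrow> 'a \<Rightarrow> 'a \<Rightarrow> 'a \<Rightarrow> 'a \<Rightarrow> 'a::field" where
  "RH a b g d y Y B G = (1 - g * d) * (1 - a * b) * Y
           / ((1 - y * a) * (1 - y * d) * (1 - inverse y * g) * (1 - inverse y * b))
       + (b - y * g * d) * B / ((1 - y * d) * (1 - inverse y * b) * (g - b))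
       + (g - y * a * b) * G / ((1 - y * a) * (1 - inverse y * g) * (b - g))"

lemma RH_alt: "RH a b g d y Y B G =
     ((1 - g * d) * (1 - a * b) / ((1 - y * a) * (1 - y * d) * (1 - inverse y * g) * (1 - inverse y * b))) * Y
   + ((b - y * g * d) / ((1 - y * d) * (1 - inverse y * b) * (g - b))) * B
   + ((g - y * a * b) / ((1 - y * a) * (1 - inverse y * g) * (b - g))) * G"
  unfolding RH_def by simp

lemma RH_lin: "c * RH a b g d y Y B G = RH a b g d y (c * Y) (c * B) (c * G)"
  unfolding RH_alt by (simp add: distrib_left mult_ac)

lemma fiber_has_sum:
  fixes yt zt yb zb :: "nat \<Rightarrow> 'a::{real_normed_field, banach}"
  assumes m: "1 \<le> m" and P: "P \<in> ccp m"
  assumes n: "norm (yt m) < 1" "norm (zt m) < 1" "norm (yb m) < 1" "norm (zb m) < 1" "norm (yb (Suc m)) < 1"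
  assumes ne: "yb (Suc m) \<noteq> 0" "yb (Suc m) \<noteq> yb m" "yb (Suc m) \<noteq> zt m" "yb m \<noteq> zt m"
  shows "((\<lambda>x. gw (Suc m) yt zt yb zb (Ext m (P, x))) has_sum
     RH (yt m) (zt m) (yb m) (zb m) (yb (Suc m)) (gw m yt zt (yb(m := yb (Suc m))) zb P)
         (gw m yt zt (yb(m := zt m)) zb P) (gw m yt zt (yb(m := yb m)) zb P)) (FibT (fst P m) (snd P m))"
proof -
  have BT: "fst P m < snd P m" using P m unfolding ccp_def by auto
  have "((\<lambda>x. Wp m yt zt yb zb P * fwt (yt m) (zt m) (yb m) (zb m) (yb (Suc m)) (fst P m) (snd P m) x) has_sum
     Wp m yt zt yb zb P * RH (yt m) (zt m) (yb m) (zb m) (yb (Suc m)) (yb (Suc m) ^ nat (snd P m - fst P m))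
        (zt m ^ nat (snd P m - fst P m)) (yb m ^ nat (snd P m - fst P m))) (FibT (fst P m) (snd P m))"
    unfolding RH_def by (rule has_sum_cmult_right[OF fib_value[OF n ne BT]])
  then show ?thesis unfolding RH_lin gw_upd[OF m] gw_Ext[OF m] .
qed


lemma Sigma_bij:
  assumes m: "1 \<le> m"
  shows "\<And>a. a \<in> Sigma (ccp m) (\<lambda>P. FibT (fst P m) (snd P m)) \<Longrightarrow> Res m (Ext m a) = a"
    "\<And>a. a \<in> Sigma (ccp m) (\<lambda>P. FibT (fst P m) (snd P m)) \<Longrightarrow> Ext m a \<in> ccp (Suc m)"
    "\<And>b. b \<in> ccp (Suc m) \<Longrightarrow> Ext m (Res m b) = b"
    "\<And>b. b \<in> ccp (Suc m) \<Longrightarrow> Res m b \<in> Sigma (ccp m) (\<lambda>P. FibT (fst P m) (snd P m))"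
proof -
  fix a assume a: "a \<in> Sigma (ccp m) (\<lambda>P. FibT (fst P m) (snd P m))"
  obtain P x where ax: "a = (P, x)" by (cases a)
  show "Res m (Ext m a) = a" using a unfolding ax by (auto intro: Res_Ext)
  show "Ext m a \<in> ccp (Suc m)" using a unfolding ax by (auto intro: Ext_in[OF m])
next
  fix b assume b: "b \<in> ccp (Suc m)"
  show "Ext m (Res m b) = b" by (rule Ext_Res)
  show "Res m b \<in> Sigma (ccp m) (\<lambda>P. FibT (fst P m) (snd P m))"
    using Res_in[OF m b] by (cases "Res m b") auto
qed

lemma gw_summable_real:
  fixes m :: nat
  assumes "1 \<le> m"
  shows "\<forall>yt zt yb zb :: nat \<Rightarrow> real. (\<forall>i. 0 \<le> yt i \<and> yt i < 1) \<and> (\<forall>i. 0 \<le> zt i \<and> zt i < 1)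
      \<and> (\<forall>i. 0 \<le> yb i \<and> yb i < 1) \<and> (\<forall>i. 0 \<le> zb i \<and> zb i < 1)
      \<longrightarrow> gw m yt zt yb zb summable_on ccp m"
  using assms
proof (induction m rule: dec_induct)
  case base
  show ?case
  proof (intro allI impI)
    fix yt zt yb zb :: "nat \<Rightarrow> real"
    assume A: "(\<forall>i. 0 \<le> yt i \<and> yt i < 1) \<and> (\<forall>i. 0 \<le> zt i \<and> zt i < 1)
      \<and> (\<forall>i. 0 \<le> yb i \<and> yb i < 1) \<and> (\<forall>i. 0 \<le> zb i \<and> zb i < 1)"
    have "yt 0 * yb 1 < 1" using A mult_strict_mono'[of "yt 0" 1 "yb 1" 1] by auto
    moreover have "0 \<le> yt 0 * yb 1" using A by auto
    ultimately have "norm (yt 0 * yb 1) < 1" by simp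
    then show "gw 1 yt zt yb zb summable_on ccp 1"
      using base_has_sum unfolding summable_on_def by blast
  qed
next
  case (step m)
  note m = step(1)
  show ?case
  proof (intro allI impI)
    fix yt zt yb zb :: "nat \<Rightarrow> real"
    assume A: "(\<forall>i. 0 \<le> yt i \<and> yt i < 1) \<and> (\<forall>i. 0 \<le> zt i \<and> zt i < 1)
      \<and> (\<forall>i. 0 \<le> yb i \<and> yb i < 1) \<and> (\<forall>i. 0 \<le> zb i \<and> zb i < 1)"
    define S where "S = yt ` {..Suc m} \<union> zt ` {..Suc m} \<union> yb ` {..Suc m} \<union> zb ` {..Suc m}"
    define R where "R = Max S"
    have fS: "finite S" "S \<noteq> {}" unfolding S_def by auto
    have RS: "R \<in> S" unfolding R_def using fS by (rule Max_in)
    have Rge: "x \<le> R" if "x \<in> S" for x unfolding R_def using fS that by simp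
    have R01: "0 \<le> R" "R < 1" using RS A unfolding S_def by auto
    have le: "yt i \<le> R" "zt i \<le> R" "yb i \<le> R" "zb i \<le> R" if "i \<le> Suc m" for i
      using Rge that unfolding S_def by auto
    define R1 where "R1 = (1 + R) / 2"
    define R2 where "R2 = (1 + R1) / 2"
    define R3 where "R3 = (1 + R2) / 2"
    have Rs: "R < R1" "R1 < R2" "R2 < R3" "R3 < 1" "0 < R1"
      using R01 unfolding R1_def R2_def R3_def by auto
    have le2: "yt i \<le> R1" "zt i \<le> R1" "zb i \<le> R1" "yb i \<le> R2" "yb i \<le> R3" if "i \<le> Suc m" for i
      using le[OF that] Rs by linarith+
    define qc where "qc = (\<lambda>_::nat. R1)"
    define qb where "qb = (\<lambda>i::nat. if i = Suc m then R3 else R2)"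
    have qcp: "0 \<le> qc i" "qc i < 1" for i using Rs unfolding qc_def by auto
    have qbp: "0 \<le> qb i" "qb i < 1" for i using Rs unfolding qb_def by auto
    have IH: "gw m qc qc (qb(m := s)) qc summable_on ccp m" if "0 \<le> s" "s < 1" for s
      using step(3) qcp qbp that by auto
    let ?Sig = "Sigma (ccp m) (\<lambda>P. FibT (fst P m) (snd P m))"
    have "(\<lambda>x. gw (Suc m) qc qc qb qc (Ext m x)) summable_on ?Sig"
    proof (rule summable_on_SigmaI)
      fix P assume P: "P \<in> ccp m"
      show "((\<lambda>x. gw (Suc m) qc qc qb qc (Ext m (P, x))) has_sum
        RH (qc m) (qc m) (qb m) (qc m) (qb (Suc m)) (gw m qc qc (qb(m := qb (Suc m))) qc P)
         (gw m qc qc (qb(m := qc m)) qc P) (gw m qc qc (qb(m := qb m)) qc P)) (FibT (fst P m) (snd P m))"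
        by (rule fiber_has_sum[OF m P]) (use qcp qbp Rs in \<open>auto simp: qc_def qb_def\<close>)
    next
      show "(\<lambda>P. RH (qc m) (qc m) (qb m) (qc m) (qb (Suc m)) (gw m qc qc (qb(m := qb (Suc m))) qc P)
         (gw m qc qc (qb(m := qc m)) qc P) (gw m qc qc (qb(m := qb m)) qc P)) summable_on ccp m"
        unfolding RH_alt
        by (intro summable_on_add summable_on_cmult_right IH qcp qbp)
    next
      fix P x
      show "0 \<le> gw (Suc m) qc qc qb qc (Ext m (P, x))" by (rule gw_nonneg) (use qcp qbp in auto)
    qed
    then have sq: "gw (Suc m) qc qc qb qc summable_on ccp (Suc m)"
      using summable_on_reindex_bij_witness[of ?Sig "Res m" "Ext m" "ccp (Suc m)" "gw (Suc m) qc qc qb qc"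
          "\<lambda>x. gw (Suc m) qc qc qb qc (Ext m x)", OF Sigma_bij[OF m]] by simp
    have bnd: "norm (gw (Suc m) yt zt yb zb P) \<le> gw (Suc m) qc qc qb qc P" if "P \<in> ccp (Suc m)" for P
    proof -
      have "0 \<le> gw (Suc m) yt zt yb zb P" by (rule gw_nonneg) (use A in auto)
      moreover have "gw (Suc m) yt zt yb zb P \<le> gw (Suc m) qc qc qb qc P"
        by (rule gw_mono) (use A le2 in \<open>auto simp: qc_def qb_def\<close>)
      ultimately show ?thesis by simp
    qed
    have "(\<lambda>P. norm (gw (Suc m) yt zt yb zb P)) summable_on ccp (Suc m)"
      by (rule Infinite_Sum.abs_summable_on_comparison_test'[OF sq bnd])
    then show "gw (Suc m) yt zt yb zb summable_on ccp (Suc m)" by (rule abs_summable_summable)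
  qed
qed

lemma gw_summable:
  fixes yt zt yb zb :: "nat \<Rightarrow> 'a::{real_normed_field, banach}"
  assumes m: "1 \<le> m"
  assumes "\<forall>i. norm (yt i) < 1" "\<forall>i. norm (zt i) < 1" "\<forall>i. norm (yb i) < 1" "\<forall>i. norm (zb i) < 1"
  shows "gw m yt zt yb zb summable_on ccp m"
proof -
  have "gw m (\<lambda>i. norm (yt i)) (\<lambda>i. norm (zt i)) (\<lambda>i. norm (yb i)) (\<lambda>i. norm (zb i)) summable_on ccp m"
    using gw_summable_real[OF m] assms by auto
  then have "(\<lambda>P. norm (gw m yt zt yb zb P)) summable_on ccp m"
    by (rule Infinite_Sum.abs_summable_on_comparison_test') (simp add: gw_norm)
  then show ?thesis by (rule abs_summable_summable)
qed


lemma infsum_lin3: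
  fixes f1 f2 f3 :: "'b \<Rightarrow> 'a::{real_normed_field, banach}"
  assumes "f1 summable_on A" "f2 summable_on A" "f3 summable_on A"
  shows "infsum (\<lambda>x. c1 * f1 x + c2 * f2 x + c3 * f3 x) A = c1 * infsum f1 A + c2 * infsum f2 A + c3 * infsum f3 A"
proof -
  have s: "(\<lambda>x. c1 * f1 x) summable_on A" "(\<lambda>x. c2 * f2 x) summable_on A" "(\<lambda>x. c3 * f3 x) summable_on A"
    using assms by (auto intro: summable_on_cmult_right)
  have "infsum (\<lambda>x. c1 * f1 x + c2 * f2 x + c3 * f3 x) A = infsum (\<lambda>x. c1 * f1 x + c2 * f2 x) A + infsum (\<lambda>x. c3 * f3 x) A"
    by (rule infsum_add[OF summable_on_add[OF s(1,2)] s(3)])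
  also have "infsum (\<lambda>x. c1 * f1 x + c2 * f2 x) A = infsum (\<lambda>x. c1 * f1 x) A + infsum (\<lambda>x. c2 * f2 x) A"
    by (rule infsum_add[OF s(1,2)])
  finally show ?thesis using assms by (simp add: infsum_cmult_right)
qed

lemma ccweight_eq: "ccweight m yt zt yb zb = gw m yt zt yb zb"
  by (rule ext) (rule ccweight_gw)

lemma Vgf_gw: "Vgf m yt zt yb zb = infsum (gw m yt zt yb zb) (ccp m)"
  unfolding Vgf_def ccweight_eq ..

theorem proposition1:
  fixes yt zt yb zb :: "nat \<Rightarrow> complex"
  assumes "\<forall>i. norm (yt i) < 1" and "\<forall>i. norm (zt i) < 1"
      and "\<forall>i. norm (yb i) < 1" and "\<forall>i. norm (zb i) < 1"
  shows "Vgf 1 yt zt yb zb = yt 0 * yb 1 / (1 - yt 0 * yb 1)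
   \<and> (\<forall>m\<ge>1. yb (Suc m) \<noteq> 0 \<and> yb m \<noteq> zt m \<and> yb (Suc m) \<noteq> yb m \<and> yb (Suc m) \<noteq> zt m \<longrightarrow>
       Vgf (Suc m) yt zt yb zb =
         (1 - yb m * zb m) * (1 - yt m * zt m) * Vgf m yt zt (yb(m := yb (Suc m))) zb
           / ((1 - yb (Suc m) * yt m) * (1 - yb (Suc m) * zb m)
              * (1 - inverse (yb (Suc m)) * yb m) * (1 - inverse (yb (Suc m)) * zt m))
       + (zt m - yb (Suc m) * yb m * zb m) * Vgf m yt zt (yb(m := zt m)) zb
           / ((1 - yb (Suc m) * zb m) * (1 - inverse (yb (Suc m)) * zt m) * (yb m - zt m))
       + (yb m - yb (Suc m) * yt m * zt m) * Vgf m yt zt (yb(m := yb m)) zb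
           / ((1 - yb (Suc m) * yt m) * (1 - inverse (yb (Suc m)) * yb m) * (zt m - yb m)))"
proof
  have "norm (yt 0 * yb 1) < 1"
    using assms(1,3) mult_strict_mono'[of "norm (yt 0)" 1 "norm (yb 1)" 1] by (auto simp: norm_mult)
  then show "Vgf 1 yt zt yb zb = yt 0 * yb 1 / (1 - yt 0 * yb 1)"
    unfolding Vgf_gw by (rule infsumI[OF base_has_sum])
next
  show "\<forall>m\<ge>1. yb (Suc m) \<noteq> 0 \<and> yb m \<noteq> zt m \<and> yb (Suc m) \<noteq> yb m \<and> yb (Suc m) \<noteq> zt m \<longrightarrow>
       Vgf (Suc m) yt zt yb zb =
         (1 - yb m * zb m) * (1 - yt m * zt m) * Vgf m yt zt (yb(m := yb (Suc m))) zb
           / ((1 - yb (Suc m) * yt m) * (1 - yb (Suc m) * zb m)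
              * (1 - inverse (yb (Suc m)) * yb m) * (1 - inverse (yb (Suc m)) * zt m))
       + (zt m - yb (Suc m) * yb m * zb m) * Vgf m yt zt (yb(m := zt m)) zb
           / ((1 - yb (Suc m) * zb m) * (1 - inverse (yb (Suc m)) * zt m) * (yb m - zt m))
       + (yb m - yb (Suc m) * yt m * zt m) * Vgf m yt zt (yb(m := yb m)) zb
           / ((1 - yb (Suc m) * yt m) * (1 - inverse (yb (Suc m)) * yb m) * (zt m - yb m))"
  proof (intro allI impI)
    fix m :: nat
    assume m: "1 \<le> m"
    assume c: "yb (Suc m) \<noteq> 0 \<and> yb m \<noteq> zt m \<and> yb (Suc m) \<noteq> yb m \<and> yb (Suc m) \<noteq> zt m"
    let ?Sig = "Sigma (ccp m) (\<lambda>P. FibT (fst P m) (snd P m))"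
    let ?a = "yt m" and ?b = "zt m" and ?g = "yb m" and ?d = "zb m" and ?y = "yb (Suc m)"
    have nrm: "\<forall>i. norm ((yb(m := s)) i) < 1" if "norm s < 1" for s
      using assms(3) that by auto
    have s1: "gw m yt zt (yb(m := ?y)) zb summable_on ccp m"
      by (rule gw_summable[OF m assms(1,2) nrm assms(4)]) (use assms(3) in auto)
    have s2: "gw m yt zt (yb(m := ?b)) zb summable_on ccp m"
      by (rule gw_summable[OF m assms(1,2) nrm assms(4)]) (use assms(2) in auto)
    have s3: "gw m yt zt (yb(m := ?g)) zb summable_on ccp m"
      by (rule gw_summable[OF m assms(1,2) nrm assms(4)]) (use assms(3) in auto)
    have sS: "gw (Suc m) yt zt yb zb summable_on ccp (Suc m)"
      using gw_summable[of "Suc m"] assms by auto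
    have sSig: "(\<lambda>x. gw (Suc m) yt zt yb zb (Ext m x)) summable_on ?Sig"
      using summable_on_reindex_bij_witness[of ?Sig "Res m" "Ext m" "ccp (Suc m)" "gw (Suc m) yt zt yb zb"
          "\<lambda>x. gw (Suc m) yt zt yb zb (Ext m x)", OF Sigma_bij[OF m]] sS by simp
    have eqR: "infsum (\<lambda>x. gw (Suc m) yt zt yb zb (Ext m x)) ?Sig = infsum (gw (Suc m) yt zt yb zb) (ccp (Suc m))"
      by (rule infsum_reindex_bij_witness[of ?Sig "Res m" "Ext m" "ccp (Suc m)" "gw (Suc m) yt zt yb zb"
          "\<lambda>x. gw (Suc m) yt zt yb zb (Ext m x)"]) (use Sigma_bij[OF m] in auto)
    have "Vgf (Suc m) yt zt yb zb = infsum (\<lambda>x. gw (Suc m) yt zt yb zb (Ext m x)) ?Sig"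
      unfolding Vgf_gw eqR ..
    also have "\<dots> = infsum (\<lambda>P. infsum (\<lambda>x. gw (Suc m) yt zt yb zb (Ext m (P, x))) (FibT (fst P m) (snd P m))) (ccp m)"
      using infsum_Sigma_banach[OF sSig] by simp
    also have "\<dots> = infsum (\<lambda>P. RH ?a ?b ?g ?d ?y (gw m yt zt (yb(m := ?y)) zb P)
         (gw m yt zt (yb(m := ?b)) zb P) (gw m yt zt (yb(m := ?g)) zb P)) (ccp m)"
    proof (rule infsum_cong)
      fix P assume P: "P \<in> ccp m"
      show "infsum (\<lambda>x. gw (Suc m) yt zt yb zb (Ext m (P, x))) (FibT (fst P m) (snd P m)) =
        RH ?a ?b ?g ?d ?y (gw m yt zt (yb(m := ?y)) zb P)
         (gw m yt zt (yb(m := ?b)) zb P) (gw m yt zt (yb(m := ?g)) zb P)"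
        by (rule infsumI[OF fiber_has_sum[OF m P]]) (use assms c in auto)
    qed
    also have "\<dots> = RH ?a ?b ?g ?d ?y (Vgf m yt zt (yb(m := ?y)) zb) (Vgf m yt zt (yb(m := ?b)) zb)
        (Vgf m yt zt (yb(m := ?g)) zb)"
      unfolding RH_alt Vgf_gw by (rule infsum_lin3[OF s1 s2 s3])
    finally show "Vgf (Suc m) yt zt yb zb =
         (1 - yb m * zb m) * (1 - yt m * zt m) * Vgf m yt zt (yb(m := yb (Suc m))) zb
           / ((1 - yb (Suc m) * yt m) * (1 - yb (Suc m) * zb m)
              * (1 - inverse (yb (Suc m)) * yb m) * (1 - inverse (yb (Suc m)) * zt m))
       + (zt m - yb (Suc m) * yb m * zb m) * Vgf m yt zt (yb(m := zt m)) zb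
           / ((1 - yb (Suc m) * zb m) * (1 - inverse (yb (Suc m)) * zt m) * (yb m - zt m))
       + (yb m - yb (Suc m) * yt m * zt m) * Vgf m yt zt (yb(m := yb m)) zb
           / ((1 - yb (Suc m) * yt m) * (1 - inverse (yb (Suc m)) * yb m) * (zt m - yb m))"
      unfolding RH_def by (simp only: mult.commute mult.left_commute mult.assoc)
  qed
qed

end
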